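(* For every $\varphi\in\mathbb{R}$, let $|\varphi\rangle = P(\varphi)|+\rangle = (|0\rangle + e^{i\varphi}|1\rangle)/\sqrt{2}$. Then $$C\bigl(|\varphi\rangle\langle\varphi|\bigr) = \frac{|\sin\varphi| + |\cos\varphi| - 1}{2}.$$
   Context: Single-qubit phase-point operators: for $q,p\in\{0,1\}$, $A_{(q,p)} = \tfrac12\bigl(I + (-1)^p X + (-1)^{q+p} Y + (-1)^q Z\bigr)$, where $X,Y,Z$ are the Pauli matrices. The Wigner function of a single-qubit density matrix $\rho$ is the vector $W_\rho\in\mathbb{R}^4$ with entries $W_\rho(q,p) = \tfrac12\operatorname{tr}(\rho A_{(q,p)})$. The single-qubit stabilizer states are the six pure states $|0\rangle,|1\rangle,|\pm\rangle=(|0\rangle\pm|1\rangle)/\sqrt2,|\pm i\rangle=(|0\rangle\pm i|1\rangle)/\sqrt2$. The stabilizer polytope $\mathcal{W}_{\mathrm{free}}\subset\mathbb{R}^4$ is the convex hull of the Wigner vectors of the stabilizer states. The Wigner distance of $\rho$ is $C(\rho) = \min_{f\in\mathcal{W}_{\mathrm{free}}} \|W_\rho - f\|_1$, with $\|\cdot\|_1$ the $\ell^1$ norm on $\mathbb{R}^4$. The phase gate is $P(\varphi) = \mathrm{diag}(1, e^{i\varphi})$. *)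

theory Defs
  imports "HOL-Analysis.Analysis"
begin

text \<open>Wigner vectors live in real^4 with coordinates ordered
(q,p) = (0,0),(0,1),(1,0),(1,1).\<close>

definition pauliX :: "complex^2^2" where
  "pauliX = vector [vector [0, 1], vector [1, 0]]"
definition pauliY :: "complex^2^2" where
  "pauliY = vector [vector [0, - \<i>], vector [\<i>, 0]]"
definition pauliZ :: "complex^2^2" where
  "pauliZ = vector [vector [1, 0], vector [0, -1]]"

definition phase_point :: "nat \<Rightarrow> nat \<Rightarrow> complex^2^2" where
  "phase_point q p = (\<chi> i j. (1/2) * ((mat 1 :: complex^2^2) $ i $ j
      + (-1) ^ p * pauliX $ i $ j
      + (-1) ^ (q + p) * pauliY $ i $ j
      + (-1) ^ q * pauliZ $ i $ j))"

text \<open>Wigner function W(q,p) = 1/2 tr(rho A_(q,p)) (real, since rho and A are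
Hermitian; we take the real part).\<close>
definition wigner_entry :: "complex^2^2 \<Rightarrow> nat \<Rightarrow> nat \<Rightarrow> real" where
  "wigner_entry \<rho> q p = Re (trace (\<rho> ** phase_point q p)) / 2"

definition wigner :: "complex^2^2 \<Rightarrow> real^4" where
  "wigner \<rho> = vector [wigner_entry \<rho> 0 0, wigner_entry \<rho> 0 1,
                       wigner_entry \<rho> 1 0, wigner_entry \<rho> 1 1]"

definition proj :: "complex^2 \<Rightarrow> complex^2^2" where
  "proj \<psi> = (\<chi> i j. \<psi> $ i * cnj (\<psi> $ j))"

definition ket0 :: "complex^2" where "ket0 = vector [1, 0]"
definition ket1 :: "complex^2" where "ket1 = vector [0, 1]"
definition ketplus :: "complex^2" where
  "ketplus = vector [1 / sqrt 2, 1 / sqrt 2]"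
definition ketminus :: "complex^2" where
  "ketminus = vector [1 / sqrt 2, - 1 / sqrt 2]"
definition ketplusi :: "complex^2" where
  "ketplusi = vector [1 / sqrt 2, \<i> / sqrt 2]"
definition ketminusi :: "complex^2" where
  "ketminusi = vector [1 / sqrt 2, - \<i> / sqrt 2]"

definition stabilizer_states :: "(complex^2) set" where
  "stabilizer_states = {ket0, ket1, ketplus, ketminus, ketplusi, ketminusi}"

definition W_free :: "(real^4) set" where
  "W_free = convex hull ((\<lambda>\<psi>. wigner (proj \<psi>)) ` stabilizer_states)"

definition l1norm :: "real^4 \<Rightarrow> real" where
  "l1norm v = (\<Sum>i\<in>UNIV. \<bar>v $ i\<bar>)"

text \<open>Wigner distance: the minimum (attained, the polytope being compact) of
the l1 distance to W_free, written as an infimum.\<close>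
definition wigner_distance :: "complex^2^2 \<Rightarrow> real" where
  "wigner_distance \<rho> = Inf {l1norm (wigner \<rho> - f) | f. f \<in> W_free}"

definition phase_gate :: "real \<Rightarrow> complex^2^2" where
  "phase_gate \<phi> = vector [vector [1, 0], vector [0, cis \<phi>]]"

end

theory Submission
  imports Defs
begin
lemma vector_4 [simp]:
 "(vector [x,y,z,w] ::('a::zero)^4)$1 = x"
 "(vector [x,y,z,w] ::('a::zero)^4)$2 = y"
 "(vector [x,y,z,w] ::('a::zero)^4)$3 = z"
 "(vector [x,y,z,w] ::('a::zero)^4)$4 = w"
  unfolding vector_def by simp_all

lemma we: "wigner_entry (proj (vector [a,b])) q p = 
  (cmod a ^2 + cmod b^2 + (-1)^q * (cmod a^2 - cmod b^2) + 2 * (-1)^p * Re (a * cnj b) - 2*(-1)^(q+p) * Im (a * cnj b)) / 4"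
  unfolding wigner_entry_def proj_def phase_point_def trace_def matrix_matrix_mult_def pauliX_def pauliY_def pauliZ_def cmod_power2
  by (simp add: sum_2 mat_def field_simps power2_eq_square)

definition WB :: "real \<Rightarrow> real \<Rightarrow> real \<Rightarrow> real^4" where
  "WB X Y Z = vector [(1+X+Y+Z)/4, (1-X-Y+Z)/4, (1+X-Y-Z)/4, (1-X+Y-Z)/4]"

lemma wigner_vec: "wigner (proj (vector [a,b])) = WB (2 * Re (a * cnj b)) (- 2 * Im (a * cnj b)) (cmod a ^2 - cmod b^2)"
  if "cmod a ^2 + cmod b^2 = 1"
  using that unfolding wigner_def WB_def by (simp add: we algebra_simps)

lemma s2: "cmod (1 / complex_of_real (sqrt 2)) ^ 2 = 1/2"
  by (simp add: norm_divide power_divide)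

lemma s3: "1 / complex_of_real (sqrt 2) * (1 / complex_of_real (sqrt 2)) = 1/2"
  by (metis of_real_divide of_real_mult of_real_numeral real_sqrt_pow2 power2_eq_square times_divide_times_eq zero_le_numeral mult_1 of_real_1)

lemma w0: "wigner (proj ket0) = WB 0 0 1" unfolding ket0_def by (subst wigner_vec) auto
lemma w1: "wigner (proj ket1) = WB 0 0 (-1)" unfolding ket1_def by (subst wigner_vec) auto
lemma wp: "wigner (proj ketplus) = WB 1 0 0" unfolding ketplus_def list.map
  by (subst wigner_vec) (auto simp: power_divide s2)
lemma wm: "wigner (proj ketminus) = WB (-1) 0 0" unfolding ketminus_def list.map
  by (subst wigner_vec) (auto simp: s2 s3 norm_divide power_divide)
lemma wpi: "wigner (proj ketplusi) = WB 0 1 0" unfolding ketplusi_def 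
  by (subst wigner_vec) (auto simp: s2 s3 norm_divide power_divide)
lemma wmi: "wigner (proj ketminusi) = WB 0 (-1) 0" unfolding ketminusi_def 
  by (subst wigner_vec) (auto simp: s2 s3 norm_divide power_divide)

definition TT :: "(real^4) set" where
  "TT = {f. f$1 + f$2 + f$3 + f$4 = 1 \<and> (\<forall>i. 0 \<le> f$i \<and> f$i \<le> 1/2)}"

lemma convex_TT: "convex TT"
  unfolding convex_def TT_def
proof (intro ballI allI impI, safe)
  fix x y :: "real^4" and u v :: real and i
  assume x: "x $ 1 + x $ 2 + x $ 3 + x $ 4 = 1" "\<forall>i. 0 \<le> x $ i \<and> x $ i \<le> 1 / 2"
    and y: "y $ 1 + y $ 2 + y $ 3 + y $ 4 = 1" "\<forall>i. 0 \<le> y $ i \<and> y $ i \<le> 1 / 2"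
    and uv: "0 \<le> u" "0 \<le> v" "u + v = 1"
  have "(u *\<^sub>R x + v *\<^sub>R y) $ 1 + (u *\<^sub>R x + v *\<^sub>R y) $ 2 + (u *\<^sub>R x + v *\<^sub>R y) $ 3 + (u *\<^sub>R x + v *\<^sub>R y) $ 4
     = u * (x $ 1 + x $ 2 + x $ 3 + x $ 4) + v * (y $ 1 + y $ 2 + y $ 3 + y $ 4)"
    by (simp add: algebra_simps)
  then show "(u *\<^sub>R x + v *\<^sub>R y) $ 1 + (u *\<^sub>R x + v *\<^sub>R y) $ 2 + (u *\<^sub>R x + v *\<^sub>R y) $ 3 + (u *\<^sub>R x + v *\<^sub>R y) $ 4 = 1"
    using x y uv by simp
  have a: "0 \<le> x$i" "x$i \<le> 1/2" "0 \<le> y$i" "y$i \<le> 1/2" using x y by auto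
  have "u * x$i \<le> u * (1/2)" using a uv by (intro mult_left_mono) auto
  moreover have "v * y$i \<le> v * (1/2)" using a uv by (intro mult_left_mono) auto
  moreover have "(u *\<^sub>R x + v *\<^sub>R y) $ i = u * x$i + v * y$i" by simp
  ultimately show "(u *\<^sub>R x + v *\<^sub>R y) $ i \<le> 1/2" using uv by linarith
  show "0 \<le> (u *\<^sub>R x + v *\<^sub>R y) $ i" using a uv by simp
qed

lemma Wfree_TT: "W_free \<subseteq> TT"
  unfolding W_free_def stabilizer_states_def
  by (rule hull_minimal[where S=convex, OF _ convex_TT]) (auto simp: w0 w1 wp wm wpi wmi TT_def WB_def forall_4)

lemma state: "phase_gate \<phi> *v ketplus = vector [1 / sqrt 2, cis \<phi> / sqrt 2]"
  unfolding phase_gate_def ketplus_def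
  by (simp add: vec_eq_iff forall_2 matrix_vector_mult_def sum_2)

lemma Wstate: "wigner (proj (phase_gate \<phi> *v ketplus)) = WB (cos \<phi>) (sin \<phi>) 0"
proof -
  have e: "1 / complex_of_real (sqrt 2) * cnj (cis \<phi> / complex_of_real (sqrt 2)) = cis (-\<phi>) / 2"
    by (simp add: cis_cnj field_simps flip: of_real_mult)
  show ?thesis unfolding state
    by (subst wigner_vec) (auto simp: s2 norm_divide power_divide e)
qed

lemma lb_aux:
  fixes c s ac as f1 f2 f3 f4 t1 t2 t3 t4 :: real
  assumes "(c \<ge> 0 \<and> ac = c) \<or> (c < 0 \<and> ac = -c)" "(s \<ge> 0 \<and> as = s) \<or> (s < 0 \<and> as = -s)"
    "(1+c+s)/4 - f1 \<le> t1" "-((1+c+s)/4 - f1) \<le> t1"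
    "(1-c-s)/4 - f2 \<le> t2" "-((1-c-s)/4 - f2) \<le> t2"
    "(1+c-s)/4 - f3 \<le> t3" "-((1+c-s)/4 - f3) \<le> t3"
    "(1-c+s)/4 - f4 \<le> t4" "-((1-c+s)/4 - f4) \<le> t4"
    "0 \<le> f1" "f1 \<le> 1/2" "0 \<le> f2" "f2 \<le> 1/2" "0 \<le> f3" "f3 \<le> 1/2" "0 \<le> f4" "f4 \<le> 1/2"
  shows "(as + ac - 1) / 2 \<le> t1 + t2 + t3 + t4"
  using assms(1,2) apply (elim disjE conjE) by (insert assms(3-), argo)+

lemma dist_aux:
  fixes c s ac as al X Y :: real
  assumes "(c \<ge> 0 \<and> ac = c) \<or> (c < 0 \<and> ac = -c)" "(s \<ge> 0 \<and> as = s) \<or> (s < 0 \<and> as = -s)"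
    "ac + as \<ge> 1" "al = (1 + ac - as) / 2" "X = (if c \<ge> 0 then 1 else -1) * al" "Y = (if s \<ge> 0 then 1 else -1) * (1 - al)"
  shows "\<bar>(1+c+s)/4 - (1+X+Y)/4\<bar> + \<bar>(1-c-s)/4 - (1-X-Y)/4\<bar> + \<bar>(1+c-s)/4 - (1+X-Y)/4\<bar> + \<bar>(1-c+s)/4 - (1-X+Y)/4\<bar> = (as + ac - 1)/2"
proof -
  have hX: "(c \<ge> 0 \<and> X = al) \<or> (c < 0 \<and> X = -al)" using assms(5) by auto
  have hY: "(s \<ge> 0 \<and> Y = 1 - al) \<or> (s < 0 \<and> Y = -(1 - al))" using assms(6) by auto
  show ?thesis using hX hY assms(1-4) by argo
qed

theorem lemma1:
  fixes \<phi> :: real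
  shows "wigner_distance (proj (phase_gate \<phi> *v ketplus))
           = (\<bar>sin \<phi>\<bar> + \<bar>cos \<phi>\<bar> - 1) / 2"
proof -
  define c where "c = cos \<phi>"
  define s where "s = sin \<phi>"
  have cs: "c^2 + s^2 = 1" unfolding c_def s_def by simp
  have c1: "\<bar>c\<bar> \<le> 1" "\<bar>s\<bar> \<le> 1" unfolding c_def s_def by auto
  have "(\<bar>c\<bar> + \<bar>s\<bar>)^2 \<ge> 1" using cs by (simp add: power2_eq_square algebra_simps abs_mult[symmetric] abs_mult_self_eq)
  then have ge1: "\<bar>c\<bar> + \<bar>s\<bar> \<ge> 1"
    by (intro power2_le_imp_le[of 1]) auto
  define D where "D = (\<bar>s\<bar> + \<bar>c\<bar> - 1) / 2"
  have lower: "D \<le> l1norm (WB c s 0 - f)" if "f \<in> TT" for f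
  proof -
    have f: "0 \<le> f$i" "f$i \<le> 1/2" for i using that unfolding TT_def by auto
    have l: "l1norm (WB c s 0 - f) = \<bar>(1+c+s)/4 - f$1\<bar> + \<bar>(1-c-s)/4 - f$2\<bar> + \<bar>(1+c-s)/4 - f$3\<bar> + \<bar>(1-c+s)/4 - f$4\<bar>"
      unfolding l1norm_def WB_def by (simp add: sum_4)
    have ab: "x \<le> \<bar>x\<bar>" "- x \<le> \<bar>x\<bar>" for x :: real by auto
    have cabs: "(c \<ge> 0 \<and> \<bar>c\<bar> = c) \<or> (c < 0 \<and> \<bar>c\<bar> = -c)" by auto
    have sabs: "(s \<ge> 0 \<and> \<bar>s\<bar> = s) \<or> (s < 0 \<and> \<bar>s\<bar> = -s)" by auto
    show ?thesis unfolding l D_def 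
      by (rule lb_aux[OF cabs sabs ab[of "(1 + c + s) / 4 - f $ 1"] ab[of "(1 - c - s) / 4 - f $ 2"] ab[of "(1 + c - s) / 4 - f $ 3"] ab[of "(1 - c + s) / 4 - f $ 4"]
        f[of 1] f[of 2] f[of 3] f[of 4]])
  qed
  define al where "al = (1 + \<bar>c\<bar> - \<bar>s\<bar>) / 2"
  have al: "0 \<le> al" "0 \<le> 1 - al" unfolding al_def using c1 by auto
  define X where "X = (if c \<ge> 0 then 1 else -1) * al"
  define Y where "Y = (if s \<ge> 0 then 1 else -1) * (1 - al)"
  have inW: "WB X Y 0 \<in> W_free"
  proof -
    have cvx: "convex W_free" unfolding W_free_def by (rule convex_convex_hull)
    have mem: "wigner (proj \<psi>) \<in> W_free" if "\<psi> \<in> stabilizer_states" for \<psi>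
      unfolding W_free_def by (rule hull_inc) (use that in auto)
    have P: "WB (if c \<ge> 0 then 1 else -1) 0 0 \<in> W_free"
      using mem[of ketplus] mem[of ketminus] unfolding stabilizer_states_def by (auto simp: wp wm)
    have Q: "WB 0 (if s \<ge> 0 then 1 else -1) 0 \<in> W_free"
      using mem[of ketplusi] mem[of ketminusi] unfolding stabilizer_states_def by (auto simp: wpi wmi)
    have "al *\<^sub>R WB (if c \<ge> 0 then 1 else -1) 0 0 + (1 - al) *\<^sub>R WB 0 (if s \<ge> 0 then 1 else -1) 0 \<in> W_free"
      using convexD[OF cvx P Q al] by simp
    moreover have "al *\<^sub>R WB (if c \<ge> 0 then 1 else -1) 0 0 + (1 - al) *\<^sub>R WB 0 (if s \<ge> 0 then 1 else -1) 0 = WB X Y 0"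
      unfolding WB_def X_def Y_def by (simp add: vec_eq_iff forall_4 field_simps)
    ultimately show ?thesis by simp
  qed
  have cabs: "(c \<ge> 0 \<and> \<bar>c\<bar> = c) \<or> (c < 0 \<and> \<bar>c\<bar> = -c)" by auto
  have sabs: "(s \<ge> 0 \<and> \<bar>s\<bar> = s) \<or> (s < 0 \<and> \<bar>s\<bar> = -s)" by auto
  have dist: "l1norm (WB c s 0 - WB X Y 0) = D"
    unfolding l1norm_def WB_def D_def
    using dist_aux[OF cabs sabs ge1 al_def X_def Y_def] by (simp add: sum_4)
  have "wigner_distance (proj (phase_gate \<phi> *v ketplus)) = D"
    unfolding wigner_distance_def Wstate c_def[symmetric] s_def[symmetric]
    apply (rule cInf_eq_minimum)
    using inW dist lower Wfree_TT by auto
  then show ?thesis unfolding D_def c_def s_def .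
qed
end
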